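(* Let $p$ be a prime, $q=p^e$, and let $T:\mathbb{F}_q\to U$ be the Teichmüller lift. Let $M_0=(T(a)^r)_{r\in[0,q-1],\,a\in\mathbb{F}_q}$ be the $q\times q$ matrix over $\mathbb{Z}_p[\xi_{q-1}]$ whose rows are indexed by $r\in\{0,1,\dots,q-1\}$ and columns by $a\in\mathbb{F}_q$ (with the convention $T(0)^0=1$, so the row $r=0$ consists of all ones), and let $\boldsymbol{M}=M_0^{\otimes k}$ be its $k$-th Kronecker (tensor) power, a $q^k\times q^k$ matrix. Then for every vector $x\in\mathbb{Q}_p(\xi_{p(q-1)})^{q^k}$, setting $y=\boldsymbol{M}x$, we have $\nu_p(y)=\nu_p(x)$.
   Context: $\xi_m$ denotes a primitive $m$-th root of unity in $\mathbb{C}_p$ (the completion of an algebraic closure of $\mathbb{Q}_p$). The ring $\mathbb{Z}_p[\xi_{q-1}]$ has maximal ideal $(p)$ and residue field identified with $\mathbb{F}_q$; $U$ is the set of roots of $X^q-X$ in $\mathbb{Z}_p[\xi_{q-1}]$ (the $(q-1)$-st roots of unity together with $0$), and the Teichmüller lift $T:\mathbb{F}_q\to U$ is the inverse of the reduction bijection $U\to\mathbb{F}_q$ (so $T(0)=0$). $\nu_p$ is the $p$-adic valuation on $\mathbb{Q}_p$ extended to $\mathbb{Q}_p(\xi_{p(q-1)})$ (values in $\frac{1}{p-1}\mathbb{Z}\cup\{\infty\}$, $\nu_p(0)=\infty$). For a vector $x=(x_1,\dots,x_n)$, $\nu_p(x)=\min_i\nu_p(x_i)$. *)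

theory Defs
  imports Complex_Main "HOL-Library.Extended_Real" "HOL-Library.Cardinality" "HOL-Computational_Algebra.Primes"
begin

definition is_valuation :: "nat \<Rightarrow> ('K::field \<Rightarrow> ereal) \<Rightarrow> bool" where
  "is_valuation p \<nu> \<longleftrightarrow>
     (\<forall>x. (\<nu> x = \<infinity>) \<longleftrightarrow> x = 0) \<and> (\<forall>x. \<nu> x \<noteq> -\<infinity>) \<and>
     (\<forall>x y. \<nu> (x * y) = \<nu> x + \<nu> y) \<and>
     (\<forall>x y. \<nu> (x + y) \<ge> min (\<nu> x) (\<nu> y)) \<and>
     \<nu> (of_nat p) = 1"

definition is_reduction :: "('K::field \<Rightarrow> ereal) \<Rightarrow> ('K \<Rightarrow> 'F::field) \<Rightarrow> bool" where
  "is_reduction \<nu> red \<longleftrightarrow>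
     (\<forall>x y. \<nu> x \<ge> 0 \<longrightarrow> \<nu> y \<ge> 0 \<longrightarrow> red (x + y) = red x + red y) \<and>
     (\<forall>x y. \<nu> x \<ge> 0 \<longrightarrow> \<nu> y \<ge> 0 \<longrightarrow> red (x * y) = red x * red y) \<and>
     red 1 = 1 \<and>
     (\<forall>x. \<nu> x \<ge> 0 \<longrightarrow> (red x = 0 \<longleftrightarrow> \<nu> x > 0)) \<and>
     red ` {x. \<nu> x \<ge> 0} = UNIV"

definition teich_set :: "('K::field \<Rightarrow> ereal) \<Rightarrow> nat \<Rightarrow> 'K set" where
  "teich_set \<nu> q = {u. \<nu> u \<ge> 0 \<and> u ^ q = u}"

text \<open>Teichmueller lift: T maps into U and is a section of the reduction map
  (hence the inverse of the bijection U -> F).\<close>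
definition is_teichmueller :: "('K::field \<Rightarrow> ereal) \<Rightarrow> nat \<Rightarrow> ('K \<Rightarrow> 'F::field) \<Rightarrow> ('F \<Rightarrow> 'K) \<Rightarrow> bool" where
  "is_teichmueller \<nu> q red T \<longleftrightarrow> (\<forall>a. T a \<in> teich_set \<nu> q \<and> red (T a) = a)"

text \<open>The q x q matrix M_0 = (T(a)^r), rows r in [0,q-1], columns a in F (0^0 = 1).\<close>
definition M0 :: "('F \<Rightarrow> 'K::field) \<Rightarrow> nat \<Rightarrow> 'F \<Rightarrow> 'K" where
  "M0 T r a = T a ^ r"

text \<open>k-th Kronecker power of a matrix whose rows/columns are indexed by 'r/'c;
  rows/columns of the power are indexed by length-k tuples (lists).\<close>
fun kron_pow :: "('r \<Rightarrow> 'c \<Rightarrow> 'a::comm_ring_1) \<Rightarrow> 'r list \<Rightarrow> 'c list \<Rightarrow> 'a" where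
  "kron_pow M [] [] = 1"
| "kron_pow M (r # rs) (c # cs) = M r c * kron_pow M rs cs"
| "kron_pow M _ _ = 0"

definition row_idx :: "nat \<Rightarrow> nat \<Rightarrow> nat list set" where
  "row_idx q k = {rs. length rs = k \<and> set rs \<subseteq> {0..<q}}"

definition col_idx :: "nat \<Rightarrow> 'F list set" where
  "col_idx k = {as. length as = k}"

definition kron_apply :: "('r \<Rightarrow> 'c \<Rightarrow> 'a::comm_ring_1) \<Rightarrow> nat \<Rightarrow> ('c list \<Rightarrow> 'a) \<Rightarrow> 'r list \<Rightarrow> 'a" where
  "kron_apply M k x rs = (\<Sum>as\<in>{as. length as = k}. kron_pow M rs as * x as)"

definition vec_val :: "('K \<Rightarrow> ereal) \<Rightarrow> 'i set \<Rightarrow> ('i \<Rightarrow> 'K) \<Rightarrow> ereal" where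
  "vec_val \<nu> I x = (INF i\<in>I. \<nu> (x i))"

end

theory Submission
  imports Defs
begin

lemma fin_len: "finite {as::'a::finite list. length as = k}"
  using finite_lists_length_eq[of "UNIV::'a set" k] by simp

lemma fermat_F:
  fixes a :: "'F::{finite,field}"
  assumes "a \<noteq> 0"
  shows "a ^ (CARD('F) - 1) = 1"
proof -
  let ?S = "UNIV - {0::'F}"
  have bij: "bij_betw (\<lambda>y. a * y) ?S ?S"
    unfolding bij_betw_def inj_on_def using assms
    by (auto simp: image_def intro!: bexI[of _ "_ / a"])
  have "prod id ?S = prod (\<lambda>y. a * y) ?S"
    using prod.reindex_bij_betw[OF bij, of id] by simp
  also have "\<dots> = a ^ card ?S * prod id ?S" by (simp add: prod.distrib)
  finally have "a ^ card ?S = 1"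
    using prod_zero_iff[of ?S id] by (simp add: field_simps)
  moreover have "card ?S = CARD('F) - 1" by (simp add: card_Diff_subset)
  ultimately show ?thesis by simp
qed

lemma inj1:
  fixes w :: "'F::{finite,field} \<Rightarrow> 'F"
  assumes h: "\<And>r. r < CARD('F) \<Longrightarrow> (\<Sum>a\<in>UNIV. a ^ r * w a) = 0"
  shows "w b = 0"
proof -
  define n where "n = CARD('F) - 1"
  have q2: "CARD('F) \<ge> 2"
  proof -
    have "{0::'F, 1} \<subseteq> UNIV" by simp
    hence "card {0::'F,1} \<le> CARD('F)" by (intro card_mono) simp_all
    thus ?thesis by simp
  qed
  hence n1: "n \<ge> 1" and nq: "n < CARD('F)" unfolding n_def by auto
  have delta: "1 - (a - b) ^ n = (if a = b then 1 else 0)" for a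
    using fermat_F[of "a - b"] n1 unfolding n_def by auto
  have "(\<Sum>a\<in>UNIV. (1 - (a - b) ^ n) * w a) = w b"
    by (simp add: delta if_distrib[of "\<lambda>c. c * _"] cong: if_cong)
  moreover have "(\<Sum>a\<in>UNIV. (1 - (a - b) ^ n) * w a) = 0"
  proof -
    have e: "(a - b) ^ n = (\<Sum>j\<le>n. of_nat (n choose j) * (-b) ^ (n - j) * a ^ j)" for a
      using binomial_ring[of a "-b" n] by (simp add: mult_ac)
    have "(\<Sum>a\<in>UNIV. (1 - (a - b) ^ n) * w a)
        = (\<Sum>a\<in>UNIV. a ^ 0 * w a) - (\<Sum>a\<in>UNIV. \<Sum>j\<le>n. of_nat (n choose j) * (-b) ^ (n - j) * (a ^ j * w a))"
      by (simp add: e left_diff_distrib right_diff_distrib sum_subtractf sum_distrib_right sum_distrib_left mult_ac)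
    also have "\<dots> = 0 - (\<Sum>j\<le>n. of_nat (n choose j) * (-b) ^ (n - j) * (\<Sum>a\<in>UNIV. a ^ j * w a))"
      using h[of 0] q2 by (simp add: sum.swap[of _ UNIV] sum_distrib_left)
    also have "\<dots> = 0" using h nq by simp
    finally show ?thesis .
  qed
  ultimately show ?thesis by simp
qed

lemma sum_len_Suc:
  "(\<Sum>as\<in>{as::'a::finite list. length as = Suc k}. f as)
     = (\<Sum>a\<in>UNIV. \<Sum>as\<in>{as. length as = k}. f (a # as))"
proof -
  have eq: "{as::'a list. length as = Suc k} = (\<lambda>(a,as). a # as) ` (UNIV \<times> {as. length as = k})"
    by (auto simp: length_Suc_conv image_def)
  have inj: "inj_on (\<lambda>(a,as). a # as) (UNIV \<times> {as::'a list. length as = k})"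
    by (auto simp: inj_on_def)
  show ?thesis
    unfolding eq sum.reindex[OF inj]
    by (simp add: sum.cartesian_product split_def)
qed

lemma injk:
  fixes z :: "'F::{finite,field} list \<Rightarrow> 'F"
  assumes "\<And>rs. rs \<in> row_idx CARD('F) k \<Longrightarrow>
     (\<Sum>as\<in>{as. length as = k}. kron_pow (\<lambda>r a. a ^ r) rs as * z as) = 0"
    and "length bs = k"
  shows "z bs = 0"
  using assms
proof (induction k arbitrary: z bs)
  case 0
  have "[] \<in> row_idx CARD('F) 0" by (simp add: row_idx_def)
  from 0(1)[OF this] 0(2) show ?case by simp
next
  case (Suc k)
  obtain b bs' where bs: "bs = b # bs'" "length bs' = k"
    using Suc.prems(2) by (auto simp: length_Suc_conv)
  define w where "w rs a = (\<Sum>as\<in>{as. length as = k}. kron_pow (\<lambda>r a. a ^ r) rs as * z (a # as))" for rs a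
  have w0: "w rs a = 0" if rs: "rs \<in> row_idx CARD('F) k" for rs a
  proof (rule inj1[where w = "w rs"])
    fix r assume r: "r < CARD('F)"
    have "r # rs \<in> row_idx CARD('F) (Suc k)" using rs r by (auto simp: row_idx_def)
    from Suc.prems(1)[OF this]
    show "(\<Sum>a\<in>UNIV. a ^ r * w rs a) = 0"
      by (simp add: sum_len_Suc w_def sum_distrib_left mult_ac)
  qed
  have "z (b # bs') = 0"
    by (rule Suc.IH[where z = "\<lambda>as. z (b # as)"]) (use w0 bs in \<open>auto simp: w_def\<close>)
  thus ?case using bs by simp
qed

lemma ereal_dbl: fixes a :: ereal assumes "a = a + a" "a \<noteq> \<infinity>" "a \<noteq> -\<infinity>" shows "a = 0"
  using assms by (cases a) auto

lemma ereal_cancel_ge: fixes a c :: ereal assumes "a + c \<ge> c" "c \<noteq> \<infinity>" "c \<noteq> -\<infinity>" shows "a \<ge> 0"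
  using assms by (cases a; cases c) auto

context
  fixes p :: nat and \<nu> :: "'K::field \<Rightarrow> ereal"
  assumes V: "is_valuation p \<nu>"
begin

lemma v_inf: "\<nu> x = \<infinity> \<longleftrightarrow> x = 0" using V by (simp add: is_valuation_def)
lemma v_ninf: "\<nu> x \<noteq> -\<infinity>" using V by (simp add: is_valuation_def)
lemma v_mult: "\<nu> (x * y) = \<nu> x + \<nu> y" using V by (simp add: is_valuation_def)
lemma v_add: "\<nu> (x + y) \<ge> min (\<nu> x) (\<nu> y)" using V by (simp add: is_valuation_def)
lemma v_0: "\<nu> 0 = \<infinity>" using v_inf by simp

lemma v_1: "\<nu> 1 = 0"
proof -
  have "\<nu> 1 = \<nu> 1 + \<nu> 1" using v_mult[of 1 1] by simp
  thus ?thesis using v_inf[of 1] v_ninf[of 1] ereal_dbl by auto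
qed

lemma v_sum: "finite A \<Longrightarrow> (\<And>i. i \<in> A \<Longrightarrow> \<nu> (f i) \<ge> m) \<Longrightarrow> \<nu> (sum f A) \<ge> m"
proof (induction A rule: finite_induct)
  case empty then show ?case by (simp add: v_0)
next
  case (insert a A)
  then have "\<nu> (f a) \<ge> m" "\<nu> (sum f A) \<ge> m" by auto
  then show ?case using insert(1,2) v_add[of "f a" "sum f A"] by (simp add: min_le_iff_disj) (meson order_trans min.boundedI)
qed

lemma v_pow_nonneg: "\<nu> a \<ge> 0 \<Longrightarrow> \<nu> (a ^ n) \<ge> 0"
  by (induction n) (auto simp: v_1 v_mult)

end

lemma kron_nonneg:
  assumes V: "is_valuation p \<nu>" and h: "\<And>r c. \<nu> (M r c) \<ge> 0"
  shows "\<nu> (kron_pow M rs cs) \<ge> 0"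
proof (induction rs arbitrary: cs)
  case Nil then show ?case by (cases cs) (auto simp: v_1[OF V] v_0[OF V])
next
  case (Cons r rs) then show ?case
    by (cases cs) (auto simp: v_0[OF V] v_mult[OF V] intro!: add_nonneg_nonneg h)
qed

lemma red_0: assumes V: "is_valuation p \<nu>" and R: "is_reduction \<nu> red" shows "red 0 = 0"
  using R v_0[OF V] by (simp add: is_reduction_def)

lemma red_mult: assumes "is_reduction \<nu> red" "\<nu> x \<ge> 0" "\<nu> y \<ge> 0" shows "red (x * y) = red x * red y"
  using assms by (simp add: is_reduction_def)

lemma red_kron:
  assumes V: "is_valuation p \<nu>" and R: "is_reduction \<nu> red" and h: "\<And>r c. \<nu> (M r c) \<ge> 0"
    and hr: "\<And>r c. red (M r c) = N r c"
  shows "red (kron_pow M rs cs) = kron_pow N rs cs"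
proof (induction rs arbitrary: cs)
  case Nil then show ?case using R by (cases cs) (auto simp: is_reduction_def red_0[OF V R])
next
  case (Cons r rs) then show ?case
    by (cases cs) (auto simp: red_0[OF V R] red_mult[OF R] h kron_nonneg[OF V h] hr)
qed

lemma red_sum:
  assumes V: "is_valuation p \<nu>" and R: "is_reduction \<nu> red"
  shows "finite A \<Longrightarrow> (\<And>i. i \<in> A \<Longrightarrow> \<nu> (f i) \<ge> 0) \<Longrightarrow> red (sum f A) = (\<Sum>i\<in>A. red (f i))"
proof (induction A rule: finite_induct)
  case empty then show ?case by (simp add: red_0[OF V R])
next
  case (insert a A)
  have "\<nu> (sum f A) \<ge> 0" using insert by (intro v_sum[OF V]) auto
  then show ?case using insert R by (simp add: is_reduction_def)
qed

theorem lemma2p3: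
  fixes p e q k :: nat
    and \<nu> :: "'K::field \<Rightarrow> ereal"
    and red :: "'K \<Rightarrow> 'F::{finite,field}"
    and T :: "'F \<Rightarrow> 'K"
    and x :: "'F list \<Rightarrow> 'K"
  assumes "prime p" and "e \<ge> 1" and "q = p ^ e"
    and "CARD('F) = q"
    and V: "is_valuation p \<nu>"
    and R: "is_reduction \<nu> red"
    and TT: "is_teichmueller \<nu> q red T"
  shows "vec_val \<nu> (row_idx q k) (kron_apply (M0 T) k x) = vec_val \<nu> (col_idx k) x"
proof -
  define X where "X = (col_idx k :: 'F list set)"
  define Y where "Y = row_idx q k"
  define y where "y = kron_apply (M0 T) k x"
  have finX: "finite X" unfolding X_def col_idx_def by (rule fin_len)
  have Ta: "\<nu> (T a) \<ge> 0" for a using TT by (simp add: is_teichmueller_def teich_set_def)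
  have Mnn: "\<nu> (M0 T r a) \<ge> 0" for r a unfolding M0_def by (rule v_pow_nonneg[OF V Ta])
  have redT: "red (M0 T r a) = a ^ r" for r a
  proof -
    have "red (T a ^ r) = a ^ r"
    proof (induction r)
      case 0 then show ?case using R by (simp add: is_reduction_def)
    next
      case (Suc r) then show ?case
        using TT by (simp add: red_mult[OF R Ta v_pow_nonneg[OF V Ta]] is_teichmueller_def)
    qed
    thus ?thesis by (simp add: M0_def)
  qed
  have kp_nn: "\<nu> (kron_pow (M0 T) rs as) \<ge> 0" for rs as by (rule kron_nonneg[OF V Mnn])
  have ydef: "y rs = (\<Sum>as\<in>X. kron_pow (M0 T) rs as * x as)" for rs
    by (simp add: y_def kron_apply_def X_def col_idx_def)
  have step1: "\<nu> (y rs) \<ge> vec_val \<nu> X x" for rs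
    unfolding ydef
  proof (rule v_sum[OF V finX])
    fix as assume "as \<in> X"
    hence "vec_val \<nu> X x \<le> \<nu> (x as)" unfolding vec_val_def by (rule INF_lower)
    also have "\<dots> \<le> \<nu> (kron_pow (M0 T) rs as * x as)"
      using kp_nn[of rs as] by (simp add: v_mult[OF V] add_increasing)
    finally show "vec_val \<nu> X x \<le> \<nu> (kron_pow (M0 T) rs as * x as)" .
  qed
  have ge: "vec_val \<nu> Y y \<ge> vec_val \<nu> X x"
    unfolding vec_val_def[of _ Y] by (rule INF_greatest) (use step1 in auto)
  have le: "vec_val \<nu> Y y \<le> vec_val \<nu> X x"
  proof (cases "\<forall>as\<in>X. x as = 0")
    case True
    hence "vec_val \<nu> X x = \<infinity>" unfolding vec_val_def
      by (simp add: v_0[OF V] flip: top_ereal_def)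
    thus ?thesis by simp
  next
    case False
    then obtain a0 where a0: "a0 \<in> X" "x a0 \<noteq> 0" by auto
    have ne: "\<nu> ` x ` X \<noteq> {}" using a0 by auto
    have "Min (\<nu> ` x ` X) \<in> \<nu> ` x ` X" using finX ne by (intro Min_in) auto
    then obtain b where b: "b \<in> X" "\<nu> (x b) = Min (\<nu> ` x ` X)" by auto
    have bmin: "\<nu> (x b) \<le> \<nu> (x as)" if "as \<in> X" for as
      using b finX that by (simp add: Min_le)
    have vb: "vec_val \<nu> X x = \<nu> (x b)"
      unfolding vec_val_def
    proof (rule antisym)
      show "(INF i\<in>X. \<nu> (x i)) \<le> \<nu> (x b)" using b(1) by (rule INF_lower)
      show "\<nu> (x b) \<le> (INF i\<in>X. \<nu> (x i))" using bmin by (rule INF_greatest)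
    qed
    define c where "c = x b"
    have "\<nu> c \<le> \<nu> (x a0)" using bmin a0 by (simp add: c_def)
    moreover have "\<nu> (x a0) \<noteq> \<infinity>" using a0 v_inf[OF V] by simp
    ultimately have cinf: "\<nu> c \<noteq> \<infinity>" by auto
    hence c0: "c \<noteq> 0" using v_inf[OF V] by simp
    have xc: "\<nu> (x as / c) \<ge> 0" if "as \<in> X" for as
    proof -
      have "\<nu> (x as / c) + \<nu> c = \<nu> (x as)" using c0 by (simp add: v_mult[OF V, symmetric])
      hence "\<nu> (x as / c) + \<nu> c \<ge> \<nu> c" using bmin[OF that] by (simp add: c_def)
      thus ?thesis using cinf v_ninf[OF V] ereal_cancel_ge by blast
    qed
    define z where "z as = red (x as / c)" for as
    have zb: "z b \<noteq> 0" using c0 R by (simp add: z_def c_def is_reduction_def)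
    have "\<exists>rs\<in>row_idx CARD('F) k.
       (\<Sum>as\<in>{as. length as = k}. kron_pow (\<lambda>r a. a ^ r) rs as * z as) \<noteq> 0"
      using injk[of k z b] zb b by (auto simp: X_def col_idx_def)
    then obtain rs where rs: "rs \<in> Y" and
      nz: "(\<Sum>as\<in>X. kron_pow (\<lambda>r a. a ^ r) rs as * z as) \<noteq> 0"
      using assms(4) by (auto simp: Y_def X_def col_idx_def)
    have yc: "y rs / c = (\<Sum>as\<in>X. kron_pow (M0 T) rs as * (x as / c))"
      by (simp add: ydef sum_divide_distrib)
    have terms: "\<nu> (kron_pow (M0 T) rs as * (x as / c)) \<ge> 0" if "as \<in> X" for as
      using kp_nn[of rs as] xc[OF that] v_mult[OF V, of "kron_pow (M0 T) rs as" "x as / c"]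
      by (simp del: times_divide_eq_right)
    have nn: "\<nu> (y rs / c) \<ge> 0" unfolding yc by (rule v_sum[OF V finX terms])
    have "red (y rs / c) = (\<Sum>as\<in>X. kron_pow (\<lambda>r a. a ^ r) rs as * z as)"
    proof -
      have "red (y rs / c) = (\<Sum>as\<in>X. red (kron_pow (M0 T) rs as * (x as / c)))"
        unfolding yc using red_sum[OF V R finX terms] .
      also have "\<dots> = (\<Sum>as\<in>X. kron_pow (\<lambda>r a. a ^ r) rs as * z as)"
      proof (rule sum.cong[OF refl])
      fix as assume "as \<in> X"
      thus "red (kron_pow (M0 T) rs as * (x as / c)) = kron_pow (\<lambda>r a. a ^ r) rs as * z as"
        using red_mult[OF R kp_nn xc] red_kron[where M="M0 T" and N="\<lambda>r a. a ^ r", OF V R Mnn redT] by (simp add: z_def del: times_divide_eq_right)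
      qed
      finally show ?thesis .
    qed
    hence "red (y rs / c) \<noteq> 0" using nz by simp
    hence "\<not> \<nu> (y rs / c) > 0" using R nn by (simp add: is_reduction_def)
    hence v0: "\<nu> (y rs / c) = 0" using nn by simp
    have "\<nu> (y rs) = \<nu> (y rs / c * c)" using c0 by simp
    also have "\<dots> = \<nu> c" unfolding v_mult[OF V] v0 by simp
    finally have "\<nu> (y rs) = vec_val \<nu> X x" using vb by (simp add: c_def)
    moreover have "vec_val \<nu> Y y \<le> \<nu> (y rs)" using rs unfolding vec_val_def by (rule INF_lower)
    ultimately show ?thesis by simp
  qed
  show ?thesis using ge le by (simp add: X_def Y_def y_def)
qed

end
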